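(* Let $G$ be the enhanced conflict graph of any traffic pattern in a multicast switch, and fix an input $i$. The subgraph of $G$ induced by the vertices representing subflows from input $i$ does not contain co-$P_3$ as an induced subgraph, where co-$P_3$ is the graph on three vertices $A,B,C$ with the single edge $BC$.
   Context: A flow is $(i,J)$ with input $i$ and nonempty fanout set $J$ of outputs; a traffic pattern is a finite set of flows; subflows are $(i,J,j)$ with $j\in J$. Enhanced conflict graph: one vertex per subflow; distinct subflows $(i,J,j),(i',J',j')$ adjacent iff $j=j'$, or $i=i'$ and $J\ne J'$. *)

theory Defs
  imports Main
begin

(* A flow is a pair (i, J): input i, fanout set J of outputs (nonempty).
   A traffic pattern is a finite set of flows. *)
definition traffic_pattern :: "('i \<times> 'o set) set \<Rightarrow> bool" where
  "traffic_pattern T \<longleftrightarrow> finite T \<and> (\<forall>(i, J) \<in> T. J \<noteq> {})"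

definition subflows :: "('i \<times> 'o set) set \<Rightarrow> ('i \<times> 'o set \<times> 'o) set" where
  "subflows T = {(i, J, j). (i, J) \<in> T \<and> j \<in> J}"

definition ecg_adj :: "('i \<times> 'o set \<times> 'o) \<Rightarrow> ('i \<times> 'o set \<times> 'o) \<Rightarrow> bool" where
  "ecg_adj u v \<longleftrightarrow> u \<noteq> v \<and>
     (case u of (i, J, j) \<Rightarrow> case v of (i', J', j') \<Rightarrow> j = j' \<or> (i = i' \<and> J \<noteq> J'))"

definition subflows_from :: "('i \<times> 'o set) set \<Rightarrow> 'i \<Rightarrow> ('i \<times> 'o set \<times> 'o) set" where
  "subflows_from T i = {v \<in> subflows T. fst v = i}"

definition has_induced_coP3 :: "'v set \<Rightarrow> ('v \<Rightarrow> 'v \<Rightarrow> bool) \<Rightarrow> bool" where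
  "has_induced_coP3 V E \<longleftrightarrow> (\<exists>a\<in>V. \<exists>b\<in>V. \<exists>c\<in>V. a \<noteq> b \<and> a \<noteq> c \<and> b \<noteq> c \<and>
      E b c \<and> \<not> E a b \<and> \<not> E a c)"

end

theory Submission
  imports Defs
begin

theorem lemma2:
  fixes T :: "('i \<times> 'o set) set" and i :: 'i
  assumes "traffic_pattern T"
  shows "\<not> has_induced_coP3 (subflows_from T i) ecg_adj"
  unfolding has_induced_coP3_def subflows_from_def ecg_adj_def
  by (auto split: prod.splits)

end
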